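(* Let $w(x)=\frac{2}{1+x^2}$, let $0<s<\tfrac12$, $\tau_s=\left(\frac{\Gamma(1-2s)\sin(s\pi)}{\pi}\int_{\mathbb{R}}w^2\right)^{-1}$, $G(x)=\frac{\Gamma(1-2s)\sin(s\pi)}{\pi}|x|^{2s-1}$, $v_w(x)=\tau_s\int_{\mathbb{R}}w^2(y)G(x-y)\,dy$, and $S(w)=-(-\Delta)^{1/2}w-w+\frac{w^2}{v_w}=\frac{w^2}{v_w}-w^2$. Let $\|\phi\|_*=\sup_{x\in\mathbb{R}}(1+|x|)^{2}|\phi(x)|$. Then for every small $\delta>0$ there is a constant $C$, independent of $s$, such that if $1-2s$ is sufficiently small, \[ \|S(w)\|_*\le C(1-2s)^{1-\delta}. \]
   Context: $w$ is the unique positive even decaying solution of $(-\Delta)^{1/2}w+w-w^2=0$ on $\mathbb{R}$, where $(-\Delta)^{1/2}$ is the Fourier multiplier $|\xi|$. $v_w$ is the solution of $(-\Delta)^sv_w=\tau_sw^2$ on $\mathbb{R}$ vanishing at infinity. The norm is the weighted norm $\|\phi\|_*=\|\rho^{-1}\phi\|_{L^\infty}$ with $\rho(x)=(1+|x|)^{-\mu}$ and weight exponent $\mu=2$. *)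

theory Defs
  imports "HOL-Analysis.Analysis"
begin

definition w0 :: "real \<Rightarrow> real" where
  "w0 x = 2 / (1 + x\<^sup>2)"

definition cG :: "real \<Rightarrow> real" where
  "cG s = Gamma (1 - 2 * s) * sin (s * pi) / pi"

definition tau :: "real \<Rightarrow> real" where
  "tau s = inverse (cG s * (LINT y|lborel. (w0 y)\<^sup>2))"

definition Gker :: "real \<Rightarrow> real \<Rightarrow> real" where
  "Gker s x = cG s * \<bar>x\<bar> powr (2 * s - 1)"

definition v_w :: "real \<Rightarrow> real \<Rightarrow> real" where
  "v_w s x = tau s * (LINT y|lborel. (w0 y)\<^sup>2 * Gker s (x - y))"

definition Sw :: "real \<Rightarrow> real \<Rightarrow> real" where
  "Sw s x = (w0 x)\<^sup>2 / v_w s x - (w0 x)\<^sup>2"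

end

theory Submission
  imports Defs
begin


lemma cauchy_half: "integrable lborel (\<lambda>x::real. 1/(1+x^2) * indicator {0..} x)"
proof -
  have "(\<integral>\<^sup>+x. ennreal (1/(1+x^2)) * indicator {0..} x \<partial>lborel) = ennreal (pi/2 - arctan 0)"
    by (rule nn_integral_FTC_atLeast)
       (auto intro!: derivative_eq_intros tendsto_arctan_at_top simp: add_nonneg_eq_0_iff field_simps power2_eq_square)
  moreover have "(\<integral>\<^sup>+x. ennreal (1/(1+x^2) * indicator {0..} x) \<partial>lborel) = (\<integral>\<^sup>+x. ennreal (1/(1+x^2)) * indicator {0..} x \<partial>lborel)"
    by (intro nn_integral_cong) (auto split: split_indicator)
  ultimately have "has_bochner_integral lborel (\<lambda>x::real. 1/(1+x^2) * indicator {0..} x) (pi/2)"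
    by (intro has_bochner_integral_nn_integral) auto
  then show ?thesis by (simp add: has_bochner_integral_iff)
qed

lemma cauchy_int: "integrable lborel (\<lambda>x::real. 1/(1+x^2))"
proof -
  have i1: "integrable lborel (\<lambda>x::real. 1/(1+(0 + (-1)*x)^2) * indicator {0..} (0 + (-1)*x))"
    using lborel_integrable_real_affine[OF cauchy_half, of "-1" 0] by simp
  have "integrable lborel (\<lambda>x::real. 1/(1+x^2) * indicator {0..} x + 1/(1+(0 + (-1)*x)^2) * indicator {0..} (0 + (-1)*x))"
    using cauchy_half i1 by (rule Bochner_Integration.integrable_add)
  then show ?thesis
    by (rule Bochner_Integration.integrable_bound) (auto simp: indicator_def)
qed

definition ksing :: "real \<Rightarrow> real" where
  "ksing t = indicator {0<..1} t * t powr (-3/4)"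

lemma ksing_int: "integrable lborel ksing"
proof -
  have "(\<lambda>x::real. x powr (-3/4)) absolutely_integrable_on {0<..1}"
    by (intro nonnegative_absolutely_integrable_1 integrable_on_powr_from_0') auto
  then have "integrable lebesgue (\<lambda>x::real. indicator {0<..1} x *\<^sub>R x powr (-3/4))"
    by (simp add: set_integrable_def)
  then have "integrable lborel (\<lambda>x::real. indicator {0<..1} x *\<^sub>R x powr (-3/4))"
    by (subst (asm) integrable_completion) auto
  then show ?thesis by (simp add: ksing_def[abs_def])
qed

definition hsing :: "real \<Rightarrow> real" where
  "hsing t = ksing t + ksing (-t)"

lemma hsing_int: "integrable lborel hsing"
proof -
  have "integrable lborel (\<lambda>x. ksing (0 + (-1) * x))"
    by (rule lborel_integrable_real_affine[OF ksing_int]) simp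
  then have "integrable lborel (\<lambda>x. ksing x + ksing (0 + (-1) * x))"
    using ksing_int by (intro Bochner_Integration.integrable_add)
  then show ?thesis by (simp add: hsing_def[abs_def])
qed

lemma hsing_shift_int: "integrable lborel (\<lambda>y. hsing (x - y))"
proof -
  have "integrable lborel (\<lambda>y. hsing (x + (-1) * y))"
    by (rule lborel_integrable_real_affine[OF hsing_int]) simp
  then show ?thesis by simp
qed

lemma hsing_shift_integral: "(LINT y|lborel. hsing (x - y)) = (LINT y|lborel. hsing y)"
  using lborel_integral_real_affine[of "-1" hsing x] by simp

lemma hsing_nonneg: "hsing t \<ge> 0"
  by (simp add: hsing_def ksing_def indicator_def)

lemma hsing_eq: "0 < \<bar>t\<bar> \<Longrightarrow> \<bar>t\<bar> \<le> 1 \<Longrightarrow> hsing t = \<bar>t\<bar> powr (-3/4)"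
  by (auto simp: hsing_def ksing_def indicator_def abs_if)

lemma w0_pos: "w0 y > 0"
  by (simp add: w0_def add_pos_nonneg)

lemma w0_sq_le: "(w0 y)^2 \<le> 4 / (1 + y^2)"
proof -
  have "(w0 y)^2 = 4 / (1+y^2)^2" by (simp add: w0_def power_divide)
  also have "\<dots> \<le> 4 / (1+y^2)"
    by (rule divide_left_mono) (auto simp: power2_eq_square add_pos_nonneg)
  finally show ?thesis .
qed

lemma w0_sq_le4: "(w0 y)^2 \<le> 4"
proof -
  have "4/(1+y^2) \<le> 4/(1::real)" by (rule divide_left_mono) (auto simp: add_pos_nonneg)
  then show ?thesis using w0_sq_le[of y] by simp
qed

lemma w0_ge1: "\<bar>y\<bar> \<le> 1 \<Longrightarrow> (w0 y)^2 \<ge> 1"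
proof -
  assume "\<bar>y\<bar> \<le> 1"
  then have "y^2 \<le> 1" by (simp add: abs_le_square_iff[symmetric] abs_square_le_1)
  then have "w0 y \<ge> 1" by (simp add: w0_def le_divide_eq add_pos_nonneg)
  then show ?thesis by (simp add: one_le_power)
qed

lemma w0_sq_y_le: "(w0 y)^2 * \<bar>y\<bar> \<le> 2 / (1 + y^2)"
proof -
  have "(w0 y)^2 * \<bar>y\<bar> = 4 * \<bar>y\<bar> / (1+y^2)^2" by (simp add: w0_def power_divide)
  also have "\<dots> \<le> 2 * (1 + y^2) / (1+y^2)^2"
  proof (rule divide_right_mono)
    have "0 \<le> (\<bar>y\<bar> - 1)^2" by simp
    then show "4 * \<bar>y\<bar> \<le> 2 * (1 + y^2)" by (simp add: power2_eq_square algebra_simps)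
  qed simp
  also have "\<dots> = 2 / (1 + y^2)"
  proof -
    have p: "(1::real) + y^2 > 0" by (simp add: add_pos_nonneg)
    have q: "\<And>q::real. q > 0 \<Longrightarrow> 2*q/q^2 = 2/q" by (simp add: power2_eq_square)
    show ?thesis using q[OF p] .
  qed
  finally show ?thesis .
qed

lemma w0_meas[measurable]: "w0 \<in> borel_measurable borel"
  unfolding w0_def[abs_def] by measurable

lemma int_w2: "integrable lborel (\<lambda>y. (w0 y)^2)"
proof -
  have "integrable lborel (\<lambda>y::real. 4 * (1/(1+y^2)))"
    by (rule integrable_mult_right[OF cauchy_int])
  then show ?thesis
    by (rule Bochner_Integration.integrable_bound) (auto intro!: AE_I2 simp: w0_sq_le)
qed

lemma int_w2y: "integrable lborel (\<lambda>y. (w0 y)^2 * \<bar>y\<bar>)"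
proof -
  have "integrable lborel (\<lambda>y::real. 2 * (1/(1+y^2)))"
    by (rule integrable_mult_right[OF cauchy_int])
  then show ?thesis
    by (rule Bochner_Integration.integrable_bound) (auto intro!: AE_I2 simp: w0_sq_y_le)
qed



lemma pw:
  fixes a e :: real
  assumes a: "a > 0" and e: "0 < e" "e \<le> 1/2"
  shows "\<bar>1 - a powr (-e)\<bar> \<le> e * (4 * a powr (-3/4) + a)"
proof (cases "a \<ge> 1")
  case True
  have le1: "a powr (-e) \<le> 1"
    using powr_mono[of "-e" 0 a] True e by simp
  have ex: "a powr (-e) = exp (-e * ln a)" using a by (simp add: powr_def)
  have "1 + (-e * ln a) \<le> exp (-e * ln a)" by (rule exp_ge_add_one_self)
  moreover have "ln a \<le> a" using ln_le_minus_one[OF a] by simp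
  ultimately have "1 - a powr (-e) \<le> e * a"
    using ex e mult_left_mono[of "ln a" a e] by linarith
  moreover have "0 \<le> e * (4 * a powr (-3/4))" using e by simp
  ultimately show ?thesis using le1 by (simp add: algebra_simps)
next
  case False
  define u where "u = -e * ln a"
  have lna: "ln a < 0" using False a by simp
  have u0: "u \<ge> 0" using lna e by (simp add: u_def mult_nonneg_nonpos2 mult_le_0_iff)
  have ex: "a powr (-e) = exp u" using a by (simp add: powr_def u_def)
  have ge1: "exp u \<ge> 1" using u0 by simp
  have "1 + (-u) \<le> exp (-u)" by (rule exp_ge_add_one_self)
  then have "exp u * (1 - u) \<le> exp u * exp (-u)"
    by (intro mult_left_mono) auto
  then have k1: "exp u - 1 \<le> u * exp u" by (simp add: exp_minus algebra_simps)
  have l4: "ln (a powr (-1/4)) = (-1/4) * ln a" using a by (simp add: ln_powr)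
  have "ln (a powr (-1/4)) \<le> a powr (-1/4) - 1" using a by (intro ln_le_minus_one) simp
  then have k2: "- ln a \<le> 4 * a powr (-1/4)" using l4 by simp
  have k3: "exp u \<le> a powr (-1/2)" using ex powr_mono'[of "-1/2" "-e" a] e a False by simp
  have "u * exp u = e * (- ln a) * exp u" by (simp add: u_def)
  also have "\<dots> \<le> e * (4 * a powr (-1/4)) * a powr (-1/2)"
  proof -
    have "(- ln a) * exp u \<le> (4 * a powr (-1/4)) * a powr (-1/2)"
      using k2 k3 lna by (intro mult_mono) auto
    then have "e * ((- ln a) * exp u) \<le> e * ((4 * a powr (-1/4)) * a powr (-1/2))"
      using e by (intro mult_left_mono) auto
    then show ?thesis by (simp only: mult.assoc)
  qed
  also have "\<dots> = e * 4 * (a powr (-1/4) * a powr (-1/2))" by simp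
  also have "a powr (-1/4) * a powr (-1/2) = a powr (-3/4)"
    by (simp add: powr_add[symmetric])
  finally have "u * exp u \<le> e * (4 * a powr (-3/4))" by simp
  moreover have "0 \<le> e * a" using e a by simp
  ultimately show ?thesis using k1 ex ge1 by (simp add: algebra_simps)
qed



definition F :: "real \<Rightarrow> real \<Rightarrow> real" where
  "F x y = (w0 y)^2 * \<bar>x - y\<bar> powr (-3/4)"

lemma F_nonneg: "F x y \<ge> 0" by (simp add: F_def)

lemma F_bound: "F x y \<le> 4 * hsing (x - y) + (w0 y)^2"
proof -
  consider "x = y" | "0 < \<bar>x - y\<bar>" "\<bar>x - y\<bar> \<le> 1" | "\<bar>x - y\<bar> > 1" by linarith
  then show ?thesis
  proof cases
    case 1 then show ?thesis using hsing_nonneg[of 0] by (simp add: F_def)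
  next
    case 2
    have "F x y \<le> 4 * \<bar>x - y\<bar> powr (-3/4)"
      unfolding F_def using w0_sq_le4[of y] by (intro mult_right_mono) auto
    then show ?thesis using hsing_eq[OF 2] zero_le_power2[of "w0 y"] by linarith
  next
    case 3
    have "\<bar>x - y\<bar> powr (-3/4) \<le> \<bar>x - y\<bar> powr 0"
      using 3 by (intro powr_mono) auto
    then have "\<bar>x - y\<bar> powr (-3/4) \<le> 1" using 3 by (simp split: if_splits)
    then have "F x y \<le> (w0 y)^2 * 1" unfolding F_def by (intro mult_left_mono) auto
    then show ?thesis using hsing_nonneg[of "x-y"] by simp
  qed
qed

lemma F_meas[measurable]: "(\<lambda>y. F x y) \<in> borel_measurable borel"
  unfolding F_def by measurable

lemma F_int: "integrable lborel (\<lambda>y. F x y)"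
proof -
  have "integrable lborel (\<lambda>y. 4 * hsing (x - y) + (w0 y)^2)"
    by (intro Bochner_Integration.integrable_add integrable_mult_right hsing_shift_int int_w2)
  then show ?thesis
    by (rule Bochner_Integration.integrable_bound) (auto intro!: AE_I2 order_trans[OF F_bound abs_ge_self] simp: F_nonneg)
qed

lemma F_integral: "(LINT y|lborel. F x y) \<le> 4 * (LINT y|lborel. hsing y) + (LINT y|lborel. (w0 y)^2)"
proof -
  have "(LINT y|lborel. F x y) \<le> (LINT y|lborel. 4 * hsing (x - y) + (w0 y)^2)"
    by (intro integral_mono F_int F_bound Bochner_Integration.integrable_add integrable_mult_right hsing_shift_int int_w2)
  also have "\<dots> = 4 * (LINT y|lborel. hsing (x - y)) + (LINT y|lborel. (w0 y)^2)"
    by (simp add: Bochner_Integration.integral_add hsing_shift_int int_w2)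
  finally show ?thesis by (simp add: hsing_shift_integral)
qed



definition Jf :: "real \<Rightarrow> real \<Rightarrow> real \<Rightarrow> real" where
  "Jf p x y = (w0 y)^2 * \<bar>x - y\<bar> powr p"

definition Dd :: "real \<Rightarrow> real \<Rightarrow> real" where
  "Dd x y = (w0 y)^2 * \<bar>x - y\<bar>"

lemma Jf_nonneg: "Jf p x y \<ge> 0" by (simp add: Jf_def)

lemma Jf_bound:
  assumes "-3/4 \<le> p" "p \<le> 0"
  shows "Jf p x y \<le> F x y + (w0 y)^2"
proof -
  consider "x = y" | "0 < \<bar>x - y\<bar>" "\<bar>x - y\<bar> \<le> 1" | "\<bar>x - y\<bar> > 1" by linarith
  then show ?thesis
  proof cases
    case 1 then show ?thesis by (simp add: Jf_def F_def)
  next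
    case 2
    have "\<bar>x - y\<bar> powr p \<le> \<bar>x - y\<bar> powr (-3/4)"
      using 2 assms by (intro powr_mono') auto
    then have "Jf p x y \<le> F x y" unfolding Jf_def F_def by (intro mult_left_mono) auto
    then show ?thesis using zero_le_power2[of "w0 y"] by linarith
  next
    case 3
    have "\<bar>x - y\<bar> powr p \<le> \<bar>x - y\<bar> powr 0"
      using 3 assms by (intro powr_mono) auto
    then have "\<bar>x - y\<bar> powr p \<le> 1" using 3 by (simp split: if_splits)
    then have "Jf p x y \<le> (w0 y)^2 * 1" unfolding Jf_def by (intro mult_left_mono) auto
    then show ?thesis using F_nonneg[of x y] by simp
  qed
qed

lemma Jf_meas[measurable]: "(\<lambda>y. Jf p x y) \<in> borel_measurable borel"
  unfolding Jf_def by measurable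

lemma Jf_int:
  assumes "-3/4 \<le> p" "p \<le> 0"
  shows "integrable lborel (\<lambda>y. Jf p x y)"
proof -
  have "integrable lborel (\<lambda>y. F x y + (w0 y)^2)"
    by (intro Bochner_Integration.integrable_add F_int int_w2)
  then show ?thesis
    by (rule Bochner_Integration.integrable_bound)
       (auto intro!: AE_I2 order_trans[OF Jf_bound[OF assms] abs_ge_self] simp: Jf_nonneg)
qed

lemma Dd_nonneg: "Dd x y \<ge> 0" by (simp add: Dd_def)

lemma Dd_bound: "Dd x y \<le> \<bar>x\<bar> * (w0 y)^2 + (w0 y)^2 * \<bar>y\<bar>"
proof -
  have "Dd x y \<le> (w0 y)^2 * (\<bar>x\<bar> + \<bar>y\<bar>)" unfolding Dd_def
    by (intro mult_left_mono) auto
  then show ?thesis by (simp add: algebra_simps)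
qed

lemma Dd_meas[measurable]: "(\<lambda>y. Dd x y) \<in> borel_measurable borel"
  unfolding Dd_def by measurable

lemma Dd_int: "integrable lborel (\<lambda>y. Dd x y)"
proof -
  have "integrable lborel (\<lambda>y. \<bar>x\<bar> * (w0 y)^2 + (w0 y)^2 * \<bar>y\<bar>)"
    by (intro Bochner_Integration.integrable_add integrable_mult_right int_w2 int_w2y)
  then show ?thesis
    by (rule Bochner_Integration.integrable_bound)
       (auto intro!: AE_I2 order_trans[OF Dd_bound abs_ge_self] simp: Dd_nonneg Dd_bound)
qed

lemma Dd_integral: "(LINT y|lborel. Dd x y) \<le> \<bar>x\<bar> * (LINT y|lborel. (w0 y)^2) + (LINT y|lborel. (w0 y)^2 * \<bar>y\<bar>)"
proof -
  have "(LINT y|lborel. Dd x y) \<le> (LINT y|lborel. \<bar>x\<bar> * (w0 y)^2 + (w0 y)^2 * \<bar>y\<bar>)"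
    by (intro integral_mono Dd_int Dd_bound Bochner_Integration.integrable_add integrable_mult_right int_w2 int_w2y)
  also have "\<dots> = \<bar>x\<bar> * (LINT y|lborel. (w0 y)^2) + (LINT y|lborel. (w0 y)^2 * \<bar>y\<bar>)"
    by (simp add: integrable_mult_right int_w2 int_w2y)
  finally show ?thesis .
qed

lemma diff_bound:
  assumes e: "0 < e" "e \<le> 1/2"
  shows "\<bar>(LINT y|lborel. (w0 y)^2) - (LINT y|lborel. Jf (-e) x y)\<bar> \<le>
     e * (4 * (4 * (LINT y|lborel. hsing y) + (LINT y|lborel. (w0 y)^2)) +
          (\<bar>x\<bar> * (LINT y|lborel. (w0 y)^2) + (LINT y|lborel. (w0 y)^2 * \<bar>y\<bar>)))"
proof -
  have ji: "integrable lborel (\<lambda>y. Jf (-e) x y)" using e by (intro Jf_int) auto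
  have gi: "integrable lborel (\<lambda>y. (w0 y)^2 - Jf (-e) x y)"
    using int_w2 ji by (rule Bochner_Integration.integrable_diff)
  have bi: "integrable lborel (\<lambda>y. e * (4 * F x y + Dd x y))"
    by (intro integrable_mult_right Bochner_Integration.integrable_add F_int Dd_int)
  have "(LINT y|lborel. (w0 y)^2) - (LINT y|lborel. Jf (-e) x y) = (LINT y|lborel. (w0 y)^2 - Jf (-e) x y)"
    using int_w2 ji by simp
  then have "\<bar>(LINT y|lborel. (w0 y)^2) - (LINT y|lborel. Jf (-e) x y)\<bar> \<le> (LINT y|lborel. \<bar>(w0 y)^2 - Jf (-e) x y\<bar>)"
    by (simp add: integral_abs_bound)
  also have "\<dots> \<le> (LINT y|lborel. e * (4 * F x y + Dd x y))"
  proof (rule integral_mono_AE)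
    show "integrable lborel (\<lambda>y. \<bar>(w0 y)^2 - Jf (-e) x y\<bar>)" using gi by (rule integrable_abs)
    show "integrable lborel (\<lambda>y. e * (4 * F x y + Dd x y))" by (rule bi)
    show "AE y in lborel. \<bar>(w0 y)^2 - Jf (-e) x y\<bar> \<le> e * (4 * F x y + Dd x y)"
      using AE_lborel_singleton[of x]
    proof eventually_elim
      case (elim y)
      then have a: "\<bar>x - y\<bar> > 0" by simp
      have "\<bar>(w0 y)^2 - Jf (-e) x y\<bar> = (w0 y)^2 * \<bar>1 - \<bar>x - y\<bar> powr (-e)\<bar>"
          proof -
        have "(w0 y)^2 - (w0 y)^2 * \<bar>x - y\<bar> powr (-e) = (w0 y)^2 * (1 - \<bar>x - y\<bar> powr (-e))"
          by (simp add: algebra_simps)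
        then show ?thesis by (simp add: Jf_def abs_mult)
      qed
      also have "\<dots> \<le> (w0 y)^2 * (e * (4 * \<bar>x - y\<bar> powr (-3/4) + \<bar>x - y\<bar>))"
        using pw[OF a e] by (intro mult_left_mono) auto
      also have "\<dots> = e * (4 * F x y + Dd x y)"
        by (simp add: F_def Dd_def algebra_simps)
      finally show ?case .
    qed
  qed
  also have "\<dots> = e * (4 * (LINT y|lborel. F x y) + (LINT y|lborel. Dd x y))"
    by (simp add: F_int Dd_int)
  also have "\<dots> \<le> e * (4 * (4 * (LINT y|lborel. hsing y) + (LINT y|lborel. (w0 y)^2)) +
          (\<bar>x\<bar> * (LINT y|lborel. (w0 y)^2) + (LINT y|lborel. (w0 y)^2 * \<bar>y\<bar>)))"
    using F_integral[of x] Dd_integral[of x] e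
    by (intro mult_left_mono add_mono) auto
  finally show ?thesis .
qed

lemma lower_bound:
  assumes "-1/2 \<le> p" "p \<le> 0"
  shows "(LINT y|lborel. Jf p x y) \<ge> (1 + \<bar>x\<bar>) powr p"
proof -
  have ii: "integrable lborel (\<lambda>y. indicator {0..1} (y::real) * (1 + \<bar>x\<bar>) powr p)"
    by (intro integrable_mult_left integrable_real_indicator) auto
  have "(LINT y|lborel. indicator {0..1} (y::real) * (1 + \<bar>x\<bar>) powr p) = (1 + \<bar>x\<bar>) powr p"
    by (auto simp: emeasure_lborel_Icc)
  moreover have "(LINT y|lborel. indicator {0..1} (y::real) * (1 + \<bar>x\<bar>) powr p) \<le> (LINT y|lborel. Jf p x y)"
  proof (rule integral_mono_AE[OF ii])
    show "integrable lborel (\<lambda>y. Jf p x y)" using assms by (intro Jf_int) auto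
    show "AE y in lborel. indicator {0..1} y * (1 + \<bar>x\<bar>) powr p \<le> Jf p x y"
      using AE_lborel_singleton[of x]
    proof eventually_elim
      case (elim y)
      show ?case
      proof (cases "y \<in> {0..1}")
        case True
        then have w1: "(w0 y)^2 \<ge> 1" by (intro w0_ge1) auto
        have a: "\<bar>x - y\<bar> > 0" "\<bar>x - y\<bar> \<le> 1 + \<bar>x\<bar>" using elim True by auto
        have "(1 + \<bar>x\<bar>) powr p \<le> \<bar>x - y\<bar> powr p"
          using a assms by (intro powr_mono2') auto
        also have "\<dots> \<le> (w0 y)^2 * \<bar>x - y\<bar> powr p"
          using w1 by (simp add: mult_le_cancel_right1)
        finally show ?thesis using True by (simp add: Jf_def)
      next
        case False then show ?thesis by (simp add: Jf_nonneg)
      qed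
    qed
  qed
  ultimately show ?thesis by simp
qed



lemma cG_pos: "0 < s \<Longrightarrow> s < 1/2 \<Longrightarrow> cG s > 0"
proof -
  assume s: "0 < s" "s < 1/2"
  have "Gamma (1 - 2 * s) > 0" using s by (intro Gamma_real_pos) auto
  moreover have "sin (s * pi) > 0" using s by (intro sin_gt_zero) auto
  ultimately show ?thesis by (simp add: cG_def)
qed

lemma v_w_eq:
  assumes "0 < s" "s < 1/2"
  shows "v_w s x = (LINT y|lborel. Jf (2 * s - 1) x y) / (LINT y|lborel. (w0 y)^2)"
proof -
  have c: "cG s \<noteq> 0" using cG_pos[OF assms] by simp
  have "v_w s x = tau s * (LINT y|lborel. cG s * Jf (2 * s - 1) x y)"
    unfolding v_w_def Gker_def Jf_def by (simp add: algebra_simps)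
  also have "\<dots> = tau s * (cG s * (LINT y|lborel. Jf (2 * s - 1) x y))" by simp
  finally show ?thesis using c by (simp add: tau_def field_simps)
qed

lemma w4: "(1 + \<bar>x\<bar>)^4 * (w0 x)^2 \<le> 16"
proof -
  have "(1 + \<bar>x\<bar>)^2 \<le> 2 * (1 + x^2)"
  proof -
    have "0 \<le> (\<bar>x\<bar> - 1)^2" by simp
    then show ?thesis by (simp add: power2_eq_square algebra_simps)
  qed
  then have "((1 + \<bar>x\<bar>)^2)^2 \<le> (2 * (1 + x^2))^2"
    by (intro power_mono) auto
  moreover have "((1 + \<bar>x\<bar>)^2)^2 = (1 + \<bar>x\<bar>)^4" by (simp flip: power_mult)
  moreover have "(2 * (1 + x^2))^2 = 4 * (1 + x^2)^2" by (simp only: power_mult_distrib) simp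
  ultimately have a: "(1 + \<bar>x\<bar>)^4 \<le> 4 * (1 + x^2)^2" by simp
  have p0: "(1::real) + x^2 > 0" by (simp add: add_pos_nonneg)
  then have p: "(1 + x^2)^2 > (0::real)" by simp
  have ww: "(w0 x)^2 = 4 / (1 + x^2)^2" by (simp add: w0_def power_divide)
  have "(1 + \<bar>x\<bar>)^4 * (4 / (1 + x^2)^2) \<le> 4 * (1 + x^2)^2 * (4 / (1 + x^2)^2)"
    using a p by (intro mult_right_mono) auto
  then have "(1 + \<bar>x\<bar>)^4 * (w0 x)^2 \<le> 4 * (1 + x^2)^2 * (4 / (1 + x^2)^2)"
    by (simp only: ww)
  also have "\<dots> = 16"
  proof -
    have p': "(1::real) + x^2 > 0" by (simp add: add_pos_nonneg)
    then show ?thesis by simp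
  qed
  finally show ?thesis .
qed



theorem lemma6p5:
  shows "\<forall>\<delta>::real. \<delta> > 0 \<longrightarrow> (\<exists>C::real. \<exists>\<epsilon>::real. \<epsilon> > 0 \<and>
     (\<forall>s::real. 0 < s \<and> s < 1/2 \<and> 1 - 2 * s < \<epsilon> \<longrightarrow>
        (\<forall>x::real. (1 + \<bar>x\<bar>)\<^sup>2 * \<bar>Sw s x\<bar> \<le> C * (1 - 2 * s) powr (1 - \<delta>))))"
proof (intro allI impI)
  fix \<delta> :: real assume d: "\<delta> > 0"
  define A0 where "A0 = (LINT y|lborel. hsing y)"
  define I where "I = (LINT y|lborel. (w0 y)^2)"
  define M where "M = (LINT y|lborel. (w0 y)^2 * \<bar>y\<bar>)"
  define K where "K = 4 * (4 * A0 + I) + I + M"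
  have A0: "A0 \<ge> 0" unfolding A0_def by (intro integral_nonneg_AE) (auto simp: hsing_nonneg)
  have I0: "I \<ge> 0" unfolding I_def by (intro integral_nonneg_AE) auto
  have M0: "M \<ge> 0" unfolding M_def by (intro integral_nonneg_AE) auto
  have K0: "K \<ge> 0" using A0 I0 M0 by (simp add: K_def)
  show "\<exists>C::real. \<exists>\<epsilon>::real. \<epsilon> > 0 \<and>
     (\<forall>s::real. 0 < s \<and> s < 1/2 \<and> 1 - 2 * s < \<epsilon> \<longrightarrow>
        (\<forall>x::real. (1 + \<bar>x\<bar>)\<^sup>2 * \<bar>Sw s x\<bar> \<le> C * (1 - 2 * s) powr (1 - \<delta>)))"
  proof (intro exI conjI allI impI)
    show "(1/2::real) > 0" by simp
    fix s x :: real
    assume s: "0 < s \<and> s < 1/2 \<and> 1 - 2 * s < 1/2"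
    define e where "e = 1 - 2 * s"
    have e: "0 < e" "e \<le> 1/2" using s by (auto simp: e_def)
    have pe: "2 * s - 1 = -e" by (simp add: e_def)
    define J where "J = (LINT y|lborel. Jf (-e) x y)"
    define X where "X = 1 + \<bar>x\<bar>"
    define W where "W = (w0 x)^2"
    have X1: "X \<ge> 1" by (simp add: X_def)
    have W0: "W \<ge> 0" by (simp add: W_def)
    have Jlow: "J \<ge> X powr (-e)" unfolding J_def X_def using e by (intro lower_bound) auto
    have Jpos: "J > 0" using Jlow X1 by (smt (verit) powr_gt_zero)
    have v: "v_w s x = J / I" using v_w_eq[of s x] s by (simp add: pe J_def I_def)
    have Sw: "Sw s x = W * (I - J) / J"
    proof (cases "I = 0")
      case True then show ?thesis using Jpos by (simp add: Sw_def v W_def)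
    next
      case False then show ?thesis using Jpos by (simp add: Sw_def v W_def field_simps)
    qed
    have h2: "1 / J \<le> X powr e"
    proof -
      have xp: "X powr (-e) > 0" using X1 by simp
      have "1 / J \<le> 1 / X powr (-e)" using Jlow xp Jpos by (intro divide_left_mono) auto
      also have "\<dots> = X powr e" using X1 by (simp add: powr_minus divide_inverse)
      finally show ?thesis .
    qed
    have h3: "X powr e \<le> X" using powr_mono[of e 1 X] X1 e by simp
    have h4: "\<bar>I - J\<bar> \<le> e * K * X"
    proof -
      have "\<bar>I - J\<bar> \<le> e * (4 * (4 * A0 + I) + (\<bar>x\<bar> * I + M))"
        using diff_bound[OF e, of x] by (simp add: A0_def I_def M_def J_def)
      also have "\<dots> \<le> e * (K * X)"
      proof (intro mult_left_mono)
        have "4 * (4 * A0 + I) + (\<bar>x\<bar> * I + M) \<le> (4 * (4 * A0 + I) + I + M) * (1 + \<bar>x\<bar>)"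
          using A0 I0 M0 by (simp add: algebra_simps)
        then show "4 * (4 * A0 + I) + (\<bar>x\<bar> * I + M) \<le> K * X" by (simp add: K_def X_def)
      qed (use e in auto)
      finally show ?thesis by simp
    qed
    have "\<bar>Sw s x\<bar> = W * \<bar>I - J\<bar> * (1 / J)" using Jpos W0 by (simp add: Sw abs_mult)
    also have "\<dots> \<le> W * (e * K * X) * X"
    proof (intro mult_mono mult_left_mono)
      show "1 / J \<le> X" using h2 h3 by simp
    qed (use W0 e K0 X1 Jpos h4 in auto)
    finally have "X^2 * \<bar>Sw s x\<bar> \<le> X^2 * (W * (e * K * X) * X)"
      using X1 by (intro mult_left_mono) auto
    also have "\<dots> = (X^4 * W) * (e * K)" by (simp add: power2_eq_square power4_eq_xxxx)
    also have "\<dots> \<le> 16 * (e * K)"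
      using w4[of x] e K0 by (intro mult_right_mono) (auto simp: X_def W_def)
    also have "\<dots> \<le> 16 * (e powr (1 - \<delta>) * K)"
    proof -
      have "e powr 1 \<le> e powr (1 - \<delta>)" using e d by (intro powr_mono') auto
      then have "e \<le> e powr (1 - \<delta>)" using e by simp
      then show ?thesis using K0 by (intro mult_left_mono mult_right_mono) auto
    qed
    finally show "(1 + \<bar>x\<bar>)\<^sup>2 * \<bar>Sw s x\<bar> \<le> (16 * K) * (1 - 2 * s) powr (1 - \<delta>)"
      by (simp add: X_def e_def algebra_simps)
  qed
qed

end
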